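(* Let $R$ be an associative ring with identity and involution $*$, and let $a\in R^{\#}\cap R^{\dagger}$. Then the following are equivalent: (1) $a\in R^{SEP}$; (2) $a(a^{\#})^*a^{\dagger}$ is a right $a^{\dagger}a^2$-idempotent; (3) $a^{\dagger}a^2$ is a left $a(a^{\#})^*a^{\dagger}$-idempotent; (4) $a^{\dagger}a^2$ is a right $a(a^{\#})^*a^{\dagger}$-idempotent.
   Context: An involution on $R$ is a map $x\mapsto x^*$ with $(x^* )^*=x$, $(x+y)^*=x^*+y^*$, $(xy)^*=y^*x^*$. An element $a$ is Moore–Penrose invertible if there is $b$ with $aba=a$, $bab=b$, $(ab)^*=ab$, $(ba)^*=ba$; such $b$ is unique, denoted $a^{\dagger}$, and $R^{\dagger}$ is the set of such $a$. An element $a$ is group invertible if there is $b$ with $aba=a$, $bab=b$, $ab=ba$; such $b$ is unique, denoted $a^{\#}$, and $R^{\#}$ is the set of such $a$. For $a\in R^{\#}\cap R^{\dagger}$, $a$ is SEP if $a^*=a^{\dagger}=a^{\#}$; $R^{SEP}$ denotes the set of SEP elements. For $e,c\in R$, $e$ is a left $c$-idempotent if $e^2=ce$, and a right $c$-idempotent if $e^2=ec$. *)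

theory Defs
  imports Main
begin

definition involution :: "('a::ring_1 \<Rightarrow> 'a) \<Rightarrow> bool" where
  "involution st \<longleftrightarrow> (\<forall>x. st (st x) = x) \<and> (\<forall>x y. st (x + y) = st x + st y)
      \<and> (\<forall>x y. st (x * y) = st y * st x)"

definition is_mp_inverse :: "('a::ring_1 \<Rightarrow> 'a) \<Rightarrow> 'a \<Rightarrow> 'a \<Rightarrow> bool" where
  "is_mp_inverse st a b \<longleftrightarrow> a * b * a = a \<and> b * a * b = b \<and> st (a * b) = a * b \<and> st (b * a) = b * a"

definition mp_invertible :: "('a::ring_1 \<Rightarrow> 'a) \<Rightarrow> 'a \<Rightarrow> bool" where
  "mp_invertible st a \<longleftrightarrow> (\<exists>b. is_mp_inverse st a b)"

definition mp_inv :: "('a::ring_1 \<Rightarrow> 'a) \<Rightarrow> 'a \<Rightarrow> 'a" where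
  "mp_inv st a = (THE b. is_mp_inverse st a b)"

definition is_group_inverse :: "'a::ring_1 \<Rightarrow> 'a \<Rightarrow> bool" where
  "is_group_inverse a b \<longleftrightarrow> a * b * a = a \<and> b * a * b = b \<and> a * b = b * a"

definition group_invertible :: "'a::ring_1 \<Rightarrow> bool" where
  "group_invertible a \<longleftrightarrow> (\<exists>b. is_group_inverse a b)"

definition group_inv :: "'a::ring_1 \<Rightarrow> 'a" where
  "group_inv a = (THE b. is_group_inverse a b)"

definition SEP :: "('a::ring_1 \<Rightarrow> 'a) \<Rightarrow> 'a \<Rightarrow> bool" where
  "SEP st a \<longleftrightarrow> group_invertible a \<and> mp_invertible st a
      \<and> st a = mp_inv st a \<and> mp_inv st a = group_inv a"

definition left_c_idempotent :: "'a::ring_1 \<Rightarrow> 'a \<Rightarrow> bool" where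
  "left_c_idempotent c e \<longleftrightarrow> e * e = c * e"

definition right_c_idempotent :: "'a::ring_1 \<Rightarrow> 'a \<Rightarrow> bool" where
  "right_c_idempotent c e \<longleftrightarrow> e * e = e * c"

end

theory Submission imports Defs begin
lemma core: fixes a b g :: "'a::monoid_mult" and s :: "'a \<Rightarrow> 'a"
  assumes s1: "\<And>x. s (s x) = x" and s2: "\<And>x y. s (x*y) = s y * s x"
  and m1: "a*b*a = a" and m2: "b*a*b = b" and m3': "s (a*b) = a*b" and m4': "s (b*a) = b*a"
  and g1: "a*g*a = a" and g2: "g*a*g = g" and g3: "a*g = g*a"
  shows "(s a = b \<and> b = g \<longleftrightarrow> (a * s g * b) * (a * s g * b) = (a * s g * b) * (b*a^2))
       \<and> (s a = b \<and> b = g \<longleftrightarrow> (b*a^2) * (b*a^2) = (a * s g * b) * (b*a^2))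
       \<and> (s a = b \<and> b = g \<longleftrightarrow> (b*a^2) * (b*a^2) = (b*a^2) * (a * s g * b))"
proof -
  have m3: "a*b = s b * s a" using m3' s2 by metis
  have m4: "b*a = s a * s b" using m4' s2 by metis
  have sg1: "s a * s g * s a = s a" using g1 s2 by (metis mult.assoc)
  have sg2: "s g * s a * s g = s g" using g2 s2 by (metis mult.assoc)
  have sg3: "s a * s g = s g * s a" using g3 s2 by metis
  have sm1: "s a * s b * s a = s a" using m1 s2 by (metis mult.assoc)
  have sm2: "s b * s a * s b = s b" using m2 s2 by (metis mult.assoc)
  have baa: "b * a * s a = s a" using m4 sm1 by (metis mult.assoc)
  have sgg: "s g = s a * s g * s g" using sg2 sg3 by (metis mult.assoc)
  have k1: "b * a * s g = s g" using baa sgg by (metis mult.assoc)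
  have fwd: "(a * s g * b) * (a * s g * b) = (a * s g * b) * (b*a^2)
     \<and> (b*a^2) * (b*a^2) = (a * s g * b) * (b*a^2)
     \<and> (b*a^2) * (b*a^2) = (b*a^2) * (a * s g * b)" if "s a = b" "b = g"
  proof -
    have "s g = a" using that s1 by metis
    hence e: "a * s g * b = a" and c: "b*a^2 = a" using that g1 g3 unfolding power2_eq_square
      by (metis mult.assoc)+
    show ?thesis unfolding e c by simp
  qed
  have r2: "s a = b \<and> b = g" if h0: "(a * s g * b) * (a * s g * b) = (a * s g * b) * (b*a^2)"
  proof -
    have "b * ((a * s g * b) * (a * s g * b)) = b * ((a * s g * b) * (b*a^2))" using h0 by simp
    moreover have "\<And>x. b*(a*(s g*x)) = s g*x" using k1 by (metis mult.assoc)
    ultimately have "s g * s g * b = s g * b * b * a * a" unfolding power2_eq_square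
      by (simp add: mult.assoc)
    hence "s a * s a * (s g * s g * b) = s a * s a * (s g * b * b * a * a)" by simp
    moreover have q2: "s a * s a * (s g * s g * x) = s g * s a * x" for x
      using sg1 sg3 by (metis mult.assoc)
    moreover have q3: "s a * s a * (s g * x) = s a * x" for x
      using sg1 sg3 by (metis mult.assoc)
    ultimately have h: "s g * s a * b = s a * b * b * a * a"
      by (simp add: mult.assoc)
    show ?thesis using s1 s2 m1 m2 m3 m4 g1 g2 g3 sg1 sg2 sg3 sm1 sm2 k1 h
      by (metis (no_types, opaque_lifting) mult.assoc)
  qed
  have r3: "s a = b \<and> b = g" if h: "(b*a^2) * (b*a^2) = (a * s g * b) * (b*a^2)"
    using s1 s2 m1 m2 m3' m4' g1 g2 g3 h unfolding power2_eq_square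
    by (metis (no_types, lifting) mult.assoc)
  have r4: "s a = b \<and> b = g" if h: "(b*a^2) * (b*a^2) = (b*a^2) * (a * s g * b)"
    using s1 s2 m1 m2 m3 m4 g1 g2 g3 sg1 sg2 sg3 sm1 sm2 k1 h unfolding power2_eq_square
    by (metis (no_types, lifting) mult.assoc)
  show ?thesis using fwd r2 r3 r4 by blast
qed

lemma mp_unique:
  fixes st :: "'a::ring_1 \<Rightarrow> 'a"
  assumes inv: "involution st" and b: "is_mp_inverse st a b" and c: "is_mp_inverse st a c"
  shows "b = c"
proof -
  have s2: "\<And>x y. st (x*y) = st y * st x" using inv unfolding involution_def by blast
  from b c have b1: "a*b*a = a" "b*a*b = b" "st (a*b) = a*b" "st (b*a) = b*a"
    and c1: "a*c*a = a" "c*a*c = c" "st (a*c) = a*c" "st (c*a) = c*a"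
    unfolding is_mp_inverse_def by auto
  have ab: "a*b = a*c" using b1 c1 s2 by (metis mult.assoc)
  have ba: "b*a = c*a" using b1 c1 s2 by (metis mult.assoc)
  show ?thesis using ab ba b1(2) c1(2) by (metis mult.assoc)
qed

lemma g_unique:
  fixes a :: "'a::ring_1"
  assumes b: "is_group_inverse a b" and c: "is_group_inverse a c"
  shows "b = c"
proof -
  from b c have b1: "a*b*a = a" "b*a*b = b" "a*b = b*a"
    and c1: "a*c*a = a" "c*a*c = c" "a*c = c*a"
    unfolding is_group_inverse_def by auto
  have ab: "a*b = a*c" using b1 c1 by (metis mult.assoc)
  show ?thesis using ab b1 c1 by (metis mult.assoc)
qed

theorem theorem3p3:
  fixes st :: "'a::ring_1 \<Rightarrow> 'a" and a :: 'a
  assumes "involution st"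
    and "group_invertible a" and "mp_invertible st a"
  shows "(SEP st a \<longleftrightarrow>
            right_c_idempotent (mp_inv st a * a ^ 2) (a * st (group_inv a) * mp_inv st a))
       \<and> (SEP st a \<longleftrightarrow>
            left_c_idempotent (a * st (group_inv a) * mp_inv st a) (mp_inv st a * a ^ 2))
       \<and> (SEP st a \<longleftrightarrow>
            right_c_idempotent (a * st (group_inv a) * mp_inv st a) (mp_inv st a * a ^ 2))"
proof -
  have mb: "is_mp_inverse st a (mp_inv st a)"
    using assms(3) mp_unique[OF assms(1)] unfolding mp_invertible_def mp_inv_def
    by (metis theI)
  have gb: "is_group_inverse a (group_inv a)"
    using assms(2) g_unique unfolding group_invertible_def group_inv_def
    by (metis theI)
  have s1: "\<And>x. st (st x) = x" and s2: "\<And>x y. st (x*y) = st y * st x"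
    using assms(1) unfolding involution_def by blast+
  have sep: "SEP st a \<longleftrightarrow> st a = mp_inv st a \<and> mp_inv st a = group_inv a"
    using assms(2,3) unfolding SEP_def by blast
  show ?thesis unfolding sep right_c_idempotent_def left_c_idempotent_def
    using core[OF s1 s2, of a "mp_inv st a" "group_inv a"] mb gb
    unfolding is_mp_inverse_def is_group_inverse_def by metis
qed
end
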